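(* Let $X_1,\dots,X_n\in\mathbb{R}$ and $1\le k\le n$. Let $\mathcal{I}\subseteq\{1,\dots,n\}$ with $|\mathcal{I}|=k$ be any subset minimizing the sum of squared deviations $\sum_{i\in\mathcal{I}}X_i^2-\frac{1}{k}\left(\sum_{i\in\mathcal{I}}X_i\right)^2$ over all $k$-subsets, and let $\mathcal{O}=\{1,\dots,n\}\setminus\mathcal{I}$. Then $\mathcal{I}$ and $\mathcal{O}$ are quadratically separable: there exist $w\in\mathbb{R}^2\setminus\{0\}$ and $b\in\mathbb{R}$ such that $w^\top(X_i^2,X_i)\le b$ for all $i\in\mathcal{I}$ and $w^\top(X_o^2,X_o)\ge b$ for all $o\in\mathcal{O}$.
   Context: Quadratic separability means linear separability of the two point sets after lifting each real number $x$ to $\mathcal{L}_2(x)=(x^2,x)\in\mathbb{R}^2$; two point sets $A,B\subseteq\mathbb{R}^2$ are linearly separable if there are $w\in\mathbb{R}^2$ and $b\in\mathbb{R}$ with $w^\top a\ge b$ for all $a\in A$ and $w^\top p\le b$ for all $p\in B$. *)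

theory Defs
  imports "HOL-Analysis.Analysis"
begin

definition quad_lift :: "real \<Rightarrow> real \<times> real" where
  "quad_lift x = (x ^ 2, x)"

definition ssd :: "(nat \<Rightarrow> real) \<Rightarrow> nat \<Rightarrow> nat set \<Rightarrow> real" where
  "ssd X k I = (\<Sum>i\<in>I. (X i)\<^sup>2) - (1 / real k) * (\<Sum>i\<in>I. X i)\<^sup>2"

end

theory Submission
  imports Defs
begin

theorem theorem3:
  fixes X :: "nat \<Rightarrow> real" and n k :: nat and I :: "nat set"
  assumes "1 \<le> k" and "k \<le> n"
    and "I \<subseteq> {1..n}" and "card I = k"
    and "\<And>J. J \<subseteq> {1..n} \<Longrightarrow> card J = k \<Longrightarrow> ssd X k I \<le> ssd X k J"
  shows "\<exists>(w :: real \<times> real) (b :: real). w \<noteq> 0 \<and>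
           (\<forall>i\<in>I. w \<bullet> quad_lift (X i) \<le> b) \<and>
           (\<forall>j\<in>{1..n} - I. w \<bullet> quad_lift (X j) \<ge> b)"
proof -
  have finI: "finite I" using assms(3) finite_subset by blast
  have neI: "I \<noteq> {}" using assms(1,4) by auto
  define S where "S = (\<Sum>i\<in>I. X i)"
  define Q where "Q = (\<Sum>i\<in>I. (X i)\<^sup>2)"
  define m where "m = S / real k"
  define g where "g = (\<lambda>x::real. x\<^sup>2 - 2 * m * x)"
  have kpos: "real k > 0" using assms(1) by simp
  have key: "g (X i) \<le> g (X p)" if i: "i \<in> I" and p: "p \<in> {1..n} - I" for i p
  proof -
    define J where "J = insert p (I - {i})"
    have J1: "J \<subseteq> {1..n}" using assms(3) p by (auto simp: J_def)
    have J2: "card J = k" using finI i p assms(4) neI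
      by (simp add: J_def card_Diff_singleton) (metis One_nat_def Suc_pred card_gt_0_iff)
    have le: "ssd X k I \<le> ssd X k J" using assms(5) J1 J2 by blast
    have sJ: "(\<Sum>j\<in>J. X j) = S - X i + X p" using finI i p
      by (simp add: J_def S_def sum.remove)
    have qJ: "(\<Sum>j\<in>J. (X j)\<^sup>2) = Q - (X i)\<^sup>2 + (X p)\<^sup>2" using finI i p
      by (simp add: J_def Q_def sum.remove)
    have "ssd X k J - ssd X k I = (X p)\<^sup>2 - (X i)\<^sup>2 - ((S - X i + X p)\<^sup>2 - S\<^sup>2) / real k"
      unfolding ssd_def sJ qJ by (simp add: S_def Q_def diff_divide_distrib)
    also have "\<dots> = g (X p) - g (X i) - (X p - X i)\<^sup>2 / real k"
      using kpos unfolding g_def m_def by (simp add: field_simps power2_eq_square)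
    finally have "0 \<le> g (X p) - g (X i) - (X p - X i)\<^sup>2 / real k" using le by linarith
    moreover have "(X p - X i)\<^sup>2 / real k \<ge> 0" using kpos by simp
    ultimately show ?thesis by linarith
  qed
  define b where "b = Max ((\<lambda>i. g (X i)) ` I)"
  have wq: "(1::real, - 2 * m) \<bullet> quad_lift x = g x" for x
    by (simp add: quad_lift_def g_def inner_prod_def)
  show ?thesis
  proof (intro exI conjI ballI)
    show "(1::real, - 2 * m) \<noteq> 0" by (simp add: zero_prod_def)
  next
    fix i assume "i \<in> I"
    then show "(1::real, - 2 * m) \<bullet> quad_lift (X i) \<le> b"
      unfolding wq b_def using finI by simp
  next
    fix j assume j: "j \<in> {1..n} - I"
    obtain i0 where i0: "i0 \<in> I" "b = g (X i0)"
    proof -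
      have "b \<in> (\<lambda>i. g (X i)) ` I" unfolding b_def using finI neI by (intro Max_in) auto
      then show ?thesis using that by blast
    qed
    show "b \<le> (1::real, - 2 * m) \<bullet> quad_lift (X j)"
      unfolding wq i0(2) using key[OF i0(1) j] .
  qed
qed

end
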